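(* Under the hypotheses below, there is a constant $C$ such that for every integer $i$ with $1\le i\le\alpha$ and all $t\in[0,T)$: $$u(x,t)\le\frac{C}{(T-t)^{\alpha-i}}\ \text{for } x\in\Omega_{i-1}\ \text{if } i\ne\alpha,\qquad u(x,t)\le -C\ln(T-t)\ \text{for } x\in\Omega_{i-1}\ \text{if } i=\alpha.$$
   Context: Standing assumptions: $\Omega\subset\mathbb{R}^N$ bounded, connected, smooth; $J\ge0$ symmetric, $\int J=1$, $J>0$ on $B(0,d)$, $J=0$ outside $B(0,d)$, and $J\in L^\infty(\mathbb{R}^N)$. Let $0<T<1$, $\alpha\ge1$, $h\in L^\infty(\mathbb{R}^N\setminus\Omega)$, $h\ge0$, $\int_\Omega\int_{\mathbb{R}^N\setminus\Omega}J(x-y)h(y)dydx>0$, $u_0\in L^\infty(\Omega)$, $u_0\ge0$, and $u$ the solution on $[0,T)$ of $u_t(x,t)=\int_\Omega J(x-y)(u(y,t)-u(x,t))dy+(T-t)^{-\alpha}\int_{\mathbb{R}^N\setminus\Omega}J(x-y)h(y)dy$, $x\in\Omega$, $u(\cdot,0)=u_0$. Sets: $\mathcal B_0=\operatorname{supp}(h)$, $\Omega_0=\Omega$, and recursively for $i\ge1$: $\mathcal B_i=\{x\in\Omega\setminus\bigcup_{1\le j<i}\mathcal B_j: \operatorname{dist}(x,\mathcal B_{i-1})<d\}$, $\Omega_i=\Omega_{i-1}\setminus\mathcal B_i$. *)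

theory Defs
  imports "HOL-Analysis.Analysis"
begin

coinductive smooth_fun :: "'a::euclidean_space set \<Rightarrow> ('a \<Rightarrow> real) \<Rightarrow> bool"
  for S where
  "continuous_on S f \<Longrightarrow>
   (\<forall>b\<in>Basis. \<exists>g. (\<forall>x\<in>S. ((\<lambda>s. f (x + s *\<^sub>R b)) has_real_derivative g x) (at 0))
                  \<and> smooth_fun S g)
   \<Longrightarrow> smooth_fun S f"

definition smooth_domain :: "'a::euclidean_space set \<Rightarrow> bool" where
  "smooth_domain \<Omega> \<longleftrightarrow> open \<Omega> \<and> bounded \<Omega> \<and> connected \<Omega> \<and> \<Omega> \<noteq> {} \<and>
     (\<forall>p\<in>frontier \<Omega>. \<exists>U \<phi>. open U \<and> p \<in> U \<and> smooth_fun U \<phi> \<and>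
        (\<forall>x\<in>U. \<exists>D. (\<phi> has_derivative D) (at x) \<and> D \<noteq> (\<lambda>_. 0)) \<and>
        \<Omega> \<inter> U = {x\<in>U. \<phi> x < 0})"

text \<open>Essential support of h viewed as an element of L-infinity of the
complement of Omega: points every neighbourhood of which meets the complement
of Omega in a set of positive measure on which h is nonzero.\<close>
definition ess_supp_out :: "'a::euclidean_space set \<Rightarrow> ('a \<Rightarrow> real) \<Rightarrow> 'a set" where
  "ess_supp_out \<Omega> h =
     {y. \<forall>e>0. emeasure lborel {z \<in> ball y e. z \<notin> \<Omega> \<and> h z \<noteq> 0} > 0}"

text \<open>The pair (B_i, Omega_i):  B_0 = supp h, Omega_0 = Omega,
  B_(i+1) = {x in Omega_i. dist(x, B_i) < d},  Omega_(i+1) = Omega_i - B_(i+1).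
  (Note Omega_i = Omega minus the union of B_1..B_i.)\<close>
primrec layer :: "'a::euclidean_space set \<Rightarrow> ('a \<Rightarrow> real) \<Rightarrow> real \<Rightarrow> nat \<Rightarrow> 'a set \<times> 'a set" where
  "layer \<Omega> h d 0 = (ess_supp_out \<Omega> h, \<Omega>)"
| "layer \<Omega> h d (Suc i) =
     (let B = fst (layer \<Omega> h d i); Oi = snd (layer \<Omega> h d i);
          B' = {x \<in> Oi. \<exists>y\<in>B. dist x y < d}
      in (B', Oi - B'))"

definition Bset :: "'a::euclidean_space set \<Rightarrow> ('a \<Rightarrow> real) \<Rightarrow> real \<Rightarrow> nat \<Rightarrow> 'a set" where
  "Bset \<Omega> h d i = fst (layer \<Omega> h d i)"

definition Omset :: "'a::euclidean_space set \<Rightarrow> ('a \<Rightarrow> real) \<Rightarrow> real \<Rightarrow> nat \<Rightarrow> 'a set" where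
  "Omset \<Omega> h d i = snd (layer \<Omega> h d i)"

text \<open>u is a solution on [0,T) of
  u_t(x,t) = int_Omega J(x-y)(u(y,t)-u(x,t)) dy + (T-t)^(-alpha) int_(R^N - Omega) J(x-y)h(y) dy,
  u(x,0) = u0(x):  for each t, u(.,t) is measurable on Omega, u is bounded on
  Omega x [0,t'] for every t' < T, and the equation holds pointwise in x with
  the time derivative taken within [0,T) (one-sided at t = 0).\<close>
definition is_solution ::
  "'a::euclidean_space set \<Rightarrow> ('a \<Rightarrow> real) \<Rightarrow> ('a \<Rightarrow> real) \<Rightarrow> real \<Rightarrow> real \<Rightarrow>
   ('a \<Rightarrow> real) \<Rightarrow> ('a \<Rightarrow> real \<Rightarrow> real) \<Rightarrow> bool" where
  "is_solution \<Omega> J h T \<alpha> u0 u \<longleftrightarrow>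
     (\<forall>t\<in>{0..<T}. set_borel_measurable lborel \<Omega> (\<lambda>y. u y t)) \<and>
     (\<forall>t'\<in>{0..<T}. \<exists>M. \<forall>y\<in>\<Omega>. \<forall>s\<in>{0..t'}. \<bar>u y s\<bar> \<le> M) \<and>
     (\<forall>x\<in>\<Omega>. u x 0 = u0 x) \<and>
     (\<forall>x\<in>\<Omega>. \<forall>t\<in>{0..<T}.
        ((\<lambda>s. u x s) has_real_derivative
           ((LINT y:\<Omega>|lborel. J (x - y) * (u y t - u x t)) +
            (T - t) powr (- \<alpha>) * (LINT y:(UNIV - \<Omega>)|lborel. J (x - y) * h y)))
        (at t within {0..<T}))"

end

theory Submission
  imports Defs
begin


lemma mono_from_deriv:
  fixes f f' :: "real \<Rightarrow> real"
  assumes ab: "a \<le> b"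
    and der: "\<And>r. a \<le> r \<Longrightarrow> r \<le> b \<Longrightarrow> (f has_real_derivative f' r) (at r within {a..b})"
    and nonpos: "\<And>r. a \<le> r \<Longrightarrow> r \<le> b \<Longrightarrow> f' r \<le> 0"
  shows "f b \<le> f a"
proof -
  have "\<exists>x\<in>{a..b}. f b - f a = (\<lambda>h. h * f' x) (b - a)"
    by (rule mvt_very_simple[OF ab]) (use der in \<open>auto simp: has_field_derivative_def mult.commute[of _ "f' _"]\<close>)
  then obtain x where x: "x \<in> {a..b}" "f b - f a = (b - a) * f' x" by auto
  have "(b - a) * f' x \<le> 0" using ab nonpos[of x] x(1) by (simp add: mult_nonneg_nonpos)
  then show ?thesis using x by simp
qed

lemma sup_gronwall:
  fixes U D :: "'a \<Rightarrow> real \<Rightarrow> real" and q Q :: "real \<Rightarrow> real"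
  assumes T: "0 < T" and L: "L \<ge> 0"
  and der: "\<And>x t. x\<in>X \<Longrightarrow> 0 \<le> t \<Longrightarrow> t < T \<Longrightarrow> (U x has_real_derivative D x t) (at t within {0..<T})"
  and bdd: "\<And>t'. 0 \<le> t' \<Longrightarrow> t' < T \<Longrightarrow> \<exists>M. \<forall>x\<in>X. \<forall>s\<in>{0..t'}. \<bar>U x s\<bar> \<le> M"
  and init: "\<And>x. x\<in>X \<Longrightarrow> \<bar>U x 0\<bar> \<le> M0"
  and Db: "\<And>t B x. 0 \<le> t \<Longrightarrow> t < T \<Longrightarrow> (\<forall>y\<in>X. \<bar>U y t\<bar> \<le> B) \<Longrightarrow> x\<in>X \<Longrightarrow> \<bar>D x t\<bar> \<le> L*B + q t"
  and Qd: "\<And>t. 0 \<le> t \<Longrightarrow> t < T \<Longrightarrow> (Q has_real_derivative q t) (at t within {0..<T})"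
  and Qmono: "\<And>s t. 0 \<le> s \<Longrightarrow> s \<le> t \<Longrightarrow> t < T \<Longrightarrow> Q s \<le> Q t"
  and Qnn: "\<And>t. 0 \<le> t \<Longrightarrow> t < T \<Longrightarrow> 0 \<le> Q t"
  shows "\<exists>c\<ge>0. \<forall>x\<in>X. \<forall>t. 0 \<le> t \<longrightarrow> t < T \<longrightarrow> \<bar>U x t\<bar> \<le> c * (M0 + Q t)"
proof -
  define h where "h = 1 / (2*L+2)"
  have hpos: "h > 0" using L by (simp add: h_def)
  have Lh: "L * h \<le> 1/2" using L by (simp add: h_def field_simps)
  have M0: "X \<noteq> {} \<Longrightarrow> M0 \<ge> 0" using init by (meson abs_ge_zero all_not_in_conv order_trans)
  have step: "\<exists>c\<ge>0. \<forall>x\<in>X. \<forall>t. 0\<le>t \<longrightarrow> t<T \<longrightarrow> t \<le> real k*h \<longrightarrow> \<bar>U x t\<bar> \<le> c*(M0+Q t)" for k :: nat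
  proof (induction k)
    case 0
    show ?case
    proof (intro exI[of _ 1] conjI ballI allI impI)
      fix x t assume "x \<in> X" "0 \<le> t" "t < T" "t \<le> real 0 * h"
      then have "t = 0" by simp
      then show "\<bar>U x t\<bar> \<le> 1 * (M0 + Q t)" using init[OF \<open>x\<in>X\<close>] Qnn[of 0] T by simp
    qed simp
  next
    case (Suc k)
    then obtain c where c0: "c \<ge> 0" and c: "\<And>x t. x\<in>X \<Longrightarrow> 0\<le>t \<Longrightarrow> t<T \<Longrightarrow> t \<le> real k*h \<Longrightarrow> \<bar>U x t\<bar> \<le> c*(M0+Q t)"
      by blast
    show ?case
    proof (intro exI[of _ "2*c+2"] conjI ballI allI impI)
      fix x t assume x: "x \<in> X" and t: "0 \<le> t" "t < T" "t \<le> real (Suc k) * h"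
      have nn: "M0 + Q t \<ge> 0" using M0 x Qnn t by force
      show "\<bar>U x t\<bar> \<le> (2*c+2) * (M0 + Q t)"
      proof (cases "t \<le> real k * h")
        case True
        then have "\<bar>U x t\<bar> \<le> c*(M0+Q t)" using c x t by blast
        also have "\<dots> \<le> (2*c+2) * (M0 + Q t)" using nn c0 by (intro mult_right_mono) auto
        finally show ?thesis .
      next
        case False
        define t0 where "t0 = real k * h"
        have t0: "0 \<le> t0" "t0 < t" "t - t0 \<le> h" using False t hpos by (auto simp: t0_def algebra_simps)
        obtain M where M: "\<forall>y\<in>X. \<forall>s\<in>{0..t}. \<bar>U y s\<bar> \<le> M" using bdd t by blast
        define S where "S = {\<bar>U y s\<bar> | y s. y\<in>X \<and> s\<in>{t0..t}}"
        define N where "N = Sup S"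
        have Sne: "S \<noteq> {}" using x t0 unfolding S_def by (auto intro!: exI[of _ x] exI[of _ t])
        have Sbdd: "bdd_above S" unfolding S_def bdd_above_def using M t0 by force
        have inS: "\<And>y s. y\<in>X \<Longrightarrow> s\<in>{t0..t} \<Longrightarrow> \<bar>U y s\<bar> \<le> N"
          unfolding N_def by (rule cSup_upper[OF _ Sbdd]) (auto simp: S_def)
        have N0: "N \<ge> 0" using inS[of x t] x t0 by force
        define A where "A = c*(M0+Q t) + Q t"
        have key: "\<bar>U y s\<bar> \<le> A + N/2" if y: "y \<in> X" and s: "s \<in> {t0..t}" for y s
        proof -
          have Dr: "\<bar>D y r\<bar> \<le> L*N + q r" if "t0 \<le> r" "r \<le> s" for r
            using Db[of r N y] inS that s t0 t y by auto
          have derr: "(U y has_real_derivative D y r) (at r within {t0..s})" if "t0 \<le> r" "r \<le> s" for r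
            using der[of y r] that s t0 t y by (auto intro: has_field_derivative_subset)
          have Qr: "(Q has_real_derivative q r) (at r within {t0..s})" if "t0 \<le> r" "r \<le> s" for r
            using Qd[of r] that s t0 t by (auto intro: has_field_derivative_subset)
          have up: "U y s - L*N*(s - t0) - Q s \<le> U y t0 - L*N*(t0 - t0) - Q t0"
          proof (rule mono_from_deriv[where f="\<lambda>r. U y r - L*N*(r - t0) - Q r" and f'="\<lambda>r. D y r - L*N - q r" and a=t0 and b=s])
            fix r assume r: "t0 \<le> r" "r \<le> s"
            show "((\<lambda>r. U y r - L*N*(r - t0) - Q r) has_real_derivative D y r - L*N - q r) (at r within {t0..s})"
              using derr[OF r] Qr[OF r] by (auto intro!: derivative_eq_intros)
            show "D y r - L*N - q r \<le> 0" using Dr[OF r] by auto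
          qed (use s in auto)
          have lo: "- U y s - L*N*(s - t0) - Q s \<le> - U y t0 - L*N*(t0 - t0) - Q t0"
          proof (rule mono_from_deriv[where f="\<lambda>r. - U y r - L*N*(r - t0) - Q r" and f'="\<lambda>r. - D y r - L*N - q r" and a=t0 and b=s])
            fix r assume r: "t0 \<le> r" "r \<le> s"
            show "((\<lambda>r. - U y r - L*N*(r - t0) - Q r) has_real_derivative - D y r - L*N - q r) (at r within {t0..s})"
              using derr[OF r] Qr[OF r] by (auto intro!: derivative_eq_intros)
            show "- D y r - L*N - q r \<le> 0" using Dr[OF r] by auto
          qed (use s in auto)
          have a1: "\<bar>U y t0\<bar> \<le> c*(M0+Q t)"
          proof -
            have "\<bar>U y t0\<bar> \<le> c*(M0+Q t0)" using c[of y t0] y t0 t by (simp add: t0_def)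
            also have "\<dots> \<le> c*(M0+Q t)" using c0 Qmono[of t0 t] t0 t by (intro mult_left_mono) auto
            finally show ?thesis .
          qed
          have a2: "L*N*(s - t0) \<le> N/2"
          proof -
            have "L*N*(s - t0) \<le> L*N*h" using s t0 L N0 by (intro mult_left_mono) auto
            also have "\<dots> = (L*h)*N" by simp
            also have "\<dots> \<le> (1/2)*N" using Lh N0 by (intro mult_right_mono) auto
            finally show ?thesis by simp
          qed
          have a3: "Q s - Q t0 \<le> Q t" using Qmono[of s t] Qnn[of t0] s t0 t by auto
          show ?thesis using up lo a1 a2 a3 unfolding A_def by auto
        qed
        have "N \<le> A + N/2" unfolding N_def
          by (rule cSup_least[OF Sne]) (use key in \<open>auto simp: S_def N_def\<close>)
        then have "N \<le> 2*A" by simp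
        moreover have "\<bar>U x t\<bar> \<le> N" using inS x t0 by auto
        moreover have "M0 \<ge> 0" using M0 x by blast
        ultimately show ?thesis unfolding A_def using nn c0 Qnn[of t] t by (auto simp: algebra_simps)
      qed
    qed (use c0 in simp)
  qed
  obtain k :: nat where k: "T / h < real k" using reals_Archimedean2 by blast
  then have "T \<le> real k * h" using hpos by (simp add: field_simps)
  with step[of k] show ?thesis by (meson less_imp_le order_le_less_trans not_le)
qed

lemma powr_deriv_aux:
  fixes K p T t :: real
  assumes "t < T" "p - 1 > 0"
  shows "((\<lambda>t. K / (p - 1) * (T - t) powr (-(p-1))) has_real_derivative K * (T - t) powr (-p)) (at t within S)"
proof -
  have "((\<lambda>t. K / (p - 1) * (T - t) powr (-(p-1))) has_real_derivative
          K / (p - 1) * ((-(p-1)) * (T - t) powr (-(p-1) - 1) * (0 - 1))) (at t within S)"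
    using assms by (intro derivative_eq_intros refl) auto
  moreover have "K / (p - 1) * ((-(p-1)) * (T - t) powr (-(p-1) - 1) * (0 - 1)) = K * (T - t) powr (-p)"
    using assms by (simp add: field_simps)
  ultimately show ?thesis by simp
qed

lemma level_bound:
  fixes U D :: "'a \<Rightarrow> real \<Rightarrow> real"
  assumes T: "0 < T" "T < 1" and p: "p \<ge> 1" and K: "K \<ge> 0"
  and der: "\<And>x t. x\<in>X \<Longrightarrow> 0 \<le> t \<Longrightarrow> t < T \<Longrightarrow> (U x has_real_derivative D x t) (at t within {0..<T})"
  and bdd: "\<And>t'. 0 \<le> t' \<Longrightarrow> t' < T \<Longrightarrow> \<exists>M. \<forall>x\<in>X. \<forall>s\<in>{0..t'}. \<bar>U x s\<bar> \<le> M"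
  and init: "\<And>x. x\<in>X \<Longrightarrow> \<bar>U x 0\<bar> \<le> MI"
  and Db: "\<And>t B x. 0 \<le> t \<Longrightarrow> t < T \<Longrightarrow> (\<forall>y\<in>X. \<bar>U y t\<bar> \<le> B) \<Longrightarrow> x\<in>X \<Longrightarrow> \<bar>D x t\<bar> \<le> 2*B + K * (T - t) powr (-p)"
  shows "\<exists>C\<ge>0. \<forall>x\<in>X. \<forall>t. 0 \<le> t \<longrightarrow> t < T \<longrightarrow>
           \<bar>U x t\<bar> \<le> C * (if p = 1 then - ln (T - t) else (T - t) powr (-(p-1)))"
proof (cases "X = {}")
  case True then show ?thesis by auto
next
  case False
  then obtain x0 where "x0 \<in> X" by auto
  then have MI: "MI \<ge> 0" using init by (meson abs_ge_zero order_trans)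
  show ?thesis
  proof (cases "p = 1")
    case True
    define Q where "Q t = - K * ln (T - t)" for t
    have "\<exists>c\<ge>0. \<forall>x\<in>X. \<forall>t. 0 \<le> t \<longrightarrow> t < T \<longrightarrow> \<bar>U x t\<bar> \<le> c * (MI + Q t)"
    proof (rule sup_gronwall[where L=2 and D=D and q="\<lambda>t. K * (T - t) powr (-p)"])
      fix t assume t: "0 \<le> t" "t < T"
      show "(Q has_real_derivative K * (T - t) powr (-p)) (at t within {0..<T})"
        unfolding Q_def using t True
        by (auto intro!: derivative_eq_intros simp: powr_minus_divide)
      show "0 \<le> Q t" unfolding Q_def using t T K by (auto intro!: mult_nonneg_nonpos)
    next
      fix s t assume "0 \<le> s" "s \<le> t" "t < T"
      then show "Q s \<le> Q t" unfolding Q_def using K by (auto intro!: mult_left_mono)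
    qed (use T der bdd init Db in auto)
    then obtain c where c0: "c \<ge> 0" and c: "\<And>x t. x\<in>X \<Longrightarrow> 0 \<le> t \<Longrightarrow> t < T \<Longrightarrow> \<bar>U x t\<bar> \<le> c * (MI + Q t)"
      by blast
    have lnT: "- ln T > 0" using T by simp
    show ?thesis
    proof (intro exI[of _ "c * (MI / (- ln T) + K)"] conjI ballI allI impI)
      show "0 \<le> c * (MI / - ln T + K)" using c0 MI K lnT by (intro mult_nonneg_nonneg add_nonneg_nonneg divide_nonneg_pos) auto
      fix x t assume x: "x \<in> X" and t: "0 \<le> t" "t < T"
      have l1: "- ln T \<le> - ln (T - t)" using t T by simp
      have "MI \<le> MI / (- ln T) * (- ln (T - t))"
      proof -
        have "MI = MI / (- ln T) * (- ln T)" using lnT by simp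
        also have "\<dots> \<le> MI / (- ln T) * (- ln (T - t))" using l1 MI lnT by (intro mult_left_mono) (auto simp: divide_nonneg_neg)
        finally show ?thesis .
      qed
      then have "MI + Q t \<le> (MI / (- ln T) + K) * (- ln (T - t))"
        unfolding Q_def by (simp add: algebra_simps)
      then have "c * (MI + Q t) \<le> c * ((MI / (- ln T) + K) * (- ln (T - t)))"
        using c0 by (intro mult_left_mono) auto
      then show "\<bar>U x t\<bar> \<le> c * (MI / - ln T + K) * (if p = 1 then - ln (T - t) else (T - t) powr - (p - 1))"
        using c[OF x t] True by simp
    qed
  next
    case False
    then have p1: "p - 1 > 0" using p by simp
    define Q where "Q t = K / (p - 1) * (T - t) powr (-(p-1))" for t
    have "\<exists>c\<ge>0. \<forall>x\<in>X. \<forall>t. 0 \<le> t \<longrightarrow> t < T \<longrightarrow> \<bar>U x t\<bar> \<le> c * (MI + Q t)"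
    proof (rule sup_gronwall[where L=2 and D=D and q="\<lambda>t. K * (T - t) powr (-p)"])
      fix t assume t: "0 \<le> t" "t < T"
      show "(Q has_real_derivative K * (T - t) powr (-p)) (at t within {0..<T})"
        unfolding Q_def by (rule powr_deriv_aux) (use t p1 in auto)
      show "0 \<le> Q t" unfolding Q_def using t T K p1 by auto
    next
      fix s t assume "0 \<le> s" "s \<le> t" "t < T"
      then have "(T - s) powr (-(p-1)) \<le> (T - t) powr (-(p-1))"
        using p1 by (intro powr_mono2') auto
      then show "Q s \<le> Q t" unfolding Q_def using K p1
        by (intro mult_left_mono) auto
    qed (use T der bdd init Db in auto)
    then obtain c where c0: "c \<ge> 0" and c: "\<And>x t. x\<in>X \<Longrightarrow> 0 \<le> t \<Longrightarrow> t < T \<Longrightarrow> \<bar>U x t\<bar> \<le> c * (MI + Q t)"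
      by blast
    show ?thesis
    proof (intro exI[of _ "c * (MI + K / (p - 1))"] conjI ballI allI impI)
      show "0 \<le> c * (MI + K / (p - 1))" using c0 MI K p1 by auto
      fix x t assume x: "x \<in> X" and t: "0 \<le> t" "t < T"
      have "1 powr (-(p-1)) \<le> (T - t) powr (-(p-1))" using t T p1
        by (intro powr_mono2') auto
      then have ge1: "(T - t) powr (-(p-1)) \<ge> 1" by simp
      have "MI + Q t \<le> (MI + K / (p - 1)) * (T - t) powr (-(p-1))"
        unfolding Q_def using MI ge1 by (simp add: algebra_simps) (metis mult_left_mono mult.right_neutral)
      then have "c * (MI + Q t) \<le> c * ((MI + K / (p - 1)) * (T - t) powr (-(p-1)))"
        using c0 by (intro mult_left_mono) auto
      then show "\<bar>U x t\<bar> \<le> c * (MI + K / (p - 1)) * (if p = 1 then - ln (T - t) else (T - t) powr - (p - 1))"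
        using c[OF x t] False by simp
    qed
  qed
qed



lemma J_shift:
  fixes J :: "'a::euclidean_space \<Rightarrow> real"
  assumes Jm: "J \<in> borel_measurable lborel" and Ji: "integrable lborel J"
    and sym: "\<forall>z. J (- z) = J z"
  shows "integrable lborel (\<lambda>y. J (x - y))" "(\<integral>y. J (x - y) \<partial>lborel) = (\<integral>z. J z \<partial>lborel)"
proof -
  have eq: "(\<lambda>y. J (x - y)) = (\<lambda>y. J ((-x) + y))"
    using sym by (metis minus_diff_eq uminus_add_conv_diff)
  have m: "((+) (-x)) \<in> measurable lborel borel" by simp
  have "integrable (distr lborel borel ((+) (-x))) J" using Ji by (simp add: lborel_distr_plus)
  moreover have Jb: "J \<in> borel_measurable borel" using Jm by simp
  ultimately have "integrable lborel (\<lambda>y. J ((-x) + y))"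
    using integrable_distr_eq[OF m Jb] by (simp only:)
  then show "integrable lborel (\<lambda>y. J (x - y))" unfolding eq .
  have "integral\<^sup>L (distr lborel borel ((+) (-x))) J = (\<integral>y. J ((-x) + y) \<partial>lborel)"
    by (rule integral_distr[OF m]) (use Jm in simp)
  then show "(\<integral>y. J (x - y) \<partial>lborel) = (\<integral>z. J z \<partial>lborel)"
    unfolding eq by (simp add: lborel_distr_plus)
qed

lemma J_bound_int:
  fixes J f :: "'a::euclidean_space \<Rightarrow> real"
  assumes Jm: "J \<in> borel_measurable lborel" and Ji: "integrable lborel J"
    and sym: "\<forall>z. J (- z) = J z" and one: "(\<integral>z. J z \<partial>lborel) = 1"
    and nn: "\<forall>z. J z \<ge> 0" and B: "B \<ge> 0"
    and fb: "\<And>y. y \<in> A \<Longrightarrow> \<bar>f y\<bar> \<le> J (x - y) * B"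
  shows "\<bar>LINT y:A|lborel. f y\<bar> \<le> B"
proof -
  have "\<bar>LINT y:A|lborel. f y\<bar> \<le> (\<integral>y. norm (indicator A y *\<^sub>R f y) \<partial>lborel)"
    unfolding set_lebesgue_integral_def using integral_norm_bound by (metis real_norm_def)
  also have "\<dots> \<le> (\<integral>y. J (x - y) * B \<partial>lborel)"
  proof (rule integral_mono')
    show "integrable lborel (\<lambda>y. J (x - y) * B)"
      using J_shift(1)[OF Jm Ji sym] by simp
    fix y
    show "norm (indicator A y *\<^sub>R f y) \<le> J (x - y) * B"
      using fb[of y] nn B by (cases "y \<in> A") auto
    show "0 \<le> J (x - y) * B" using nn B by simp
  qed
  also have "\<dots> = B" using J_shift(2)[OF Jm Ji sym, of x] one by simp
  finally show ?thesis .
qed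

lemma layer_simps:
  "Omset \<Omega> h d 0 = \<Omega>"
  "Bset \<Omega> h d 0 = ess_supp_out \<Omega> h"
  "Bset \<Omega> h d (Suc k) = {x \<in> Omset \<Omega> h d k. \<exists>y\<in>Bset \<Omega> h d k. dist x y < d}"
  "Omset \<Omega> h d (Suc k) = Omset \<Omega> h d k - Bset \<Omega> h d (Suc k)"
  by (simp_all add: Omset_def Bset_def Let_def)

lemma Omset_sub: "Omset \<Omega> h d k \<subseteq> \<Omega>"
  by (induction k) (auto simp: layer_simps)

lemma Omset_anti: "k \<le> j \<Longrightarrow> Omset \<Omega> h d j \<subseteq> Omset \<Omega> h d k"
proof (induction j)
  case 0 then show ?case by simp
next
  case (Suc j) then show ?case by (cases "k = Suc j") (auto simp: layer_simps)
qed

lemma Omset_key: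
  "x \<in> Omset \<Omega> h d (Suc k) \<Longrightarrow> y \<in> \<Omega> \<Longrightarrow> dist x y < d \<Longrightarrow> y \<in> Omset \<Omega> h d k"
proof (induction k arbitrary: x)
  case 0 then show ?case by (simp add: layer_simps)
next
  case (Suc k)
  have xk: "x \<in> Omset \<Omega> h d (Suc k)" using Suc.prems(1) Omset_anti[of "Suc k" "Suc (Suc k)"] by auto
  have yk: "y \<in> Omset \<Omega> h d k" using Suc.IH[OF xk Suc.prems(2,3)] .
  show ?case
  proof (rule ccontr)
    assume "y \<notin> Omset \<Omega> h d (Suc k)"
    then have "y \<in> Bset \<Omega> h d (Suc k)" using yk by (simp add: layer_simps)
    then have "x \<in> Bset \<Omega> h d (Suc (Suc k))" using xk Suc.prems(3)
      by (subst layer_simps) auto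
    then show False using Suc.prems(1) by (simp add: layer_simps)
  qed
qed

lemma Omset1: "x \<in> Omset \<Omega> h d (Suc 0) \<Longrightarrow> x \<in> \<Omega> \<and> (\<forall>y\<in>ess_supp_out \<Omega> h. \<not> dist x y < d)"
  by (auto simp: layer_simps)



lemma g_zero:
  fixes J h :: "'a::euclidean_space \<Rightarrow> real"
  assumes Oopen: "open \<Omega>"
    and h_meas: "set_borel_measurable lborel (UNIV - \<Omega>) h"
    and J_zero: "\<forall>z. norm z \<ge> d \<longrightarrow> J z = 0"
    and far: "\<forall>y\<in>ess_supp_out \<Omega> h. \<not> dist x y < d"
  shows "(LINT y:(UNIV - \<Omega>)|lborel. J (x - y) * h y) = 0"
proof -
  define H where "H = {w. indicator (UNIV - \<Omega>) w * h w \<noteq> (0::real)}"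
  have hm[measurable]: "(\<lambda>w. indicator (UNIV - \<Omega>) w * h w :: real) \<in> borel_measurable lborel"
    using h_meas unfolding set_borel_measurable_def by simp
  have "{w \<in> space lborel. indicator (UNIV - \<Omega>) w * h w \<noteq> (0::real)} \<in> sets lborel"
    by measurable
  then have Hm: "H \<in> sets lborel" unfolding H_def by simp
  have H_eq: "{w \<in> ball z e. w \<notin> \<Omega> \<and> h w \<noteq> 0} = ball z e \<inter> H" for z e
    by (auto simp: H_def)
  have "\<forall>z\<in>ball x d. \<exists>e>0. emeasure lborel (ball z e \<inter> H) = 0"
  proof
    fix z assume "z \<in> ball x d"
    then have "z \<notin> ess_supp_out \<Omega> h" using far by auto
    then obtain e where "e > 0" "\<not> emeasure lborel {w \<in> ball z e. w \<notin> \<Omega> \<and> h w \<noteq> 0} > 0"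
      unfolding ess_supp_out_def by auto
    then show "\<exists>e>0. emeasure lborel (ball z e \<inter> H) = 0"
      using H_eq by (auto simp: not_less)
  qed
  then obtain e where e: "\<And>z. z \<in> ball x d \<Longrightarrow> e z > 0 \<and> emeasure lborel (ball z (e z) \<inter> H) = 0"
    by metis
  obtain F where F: "F \<subseteq> (\<lambda>z. ball z (e z)) ` ball x d" "countable F"
    "\<Union>F = \<Union>((\<lambda>z. ball z (e z)) ` ball x d)"
    using Lindelof[of "(\<lambda>z. ball z (e z)) ` ball x d"] by auto
  have Fnull: "B \<inter> H \<in> null_sets lborel" if BF: "B \<in> F" for B
  proof -
    obtain z where z: "z \<in> ball x d" "B = ball z (e z)" using F(1) BF by auto
    show ?thesis using e[OF z(1)] z(2) Hm by (auto intro!: null_setsI)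
  qed
  have N: "(\<Union>B\<in>F. B \<inter> H) \<in> null_sets lborel"
    by (rule null_sets_UN') (use F(2) Fnull in auto)
  have cov: "ball x d \<subseteq> \<Union>F"
    using F(3) e by force
  have "AE y in lborel. indicator (UNIV - \<Omega>) y *\<^sub>R (J (x - y) * h y) = 0"
  proof (rule AE_I'[OF N])
    show "{y \<in> space lborel. \<not> indicator (UNIV - \<Omega>) y *\<^sub>R (J (x - y) * h y) = 0} \<subseteq> (\<Union>B\<in>F. B \<inter> H)"
    proof
      fix y assume y: "y \<in> {y \<in> space lborel. \<not> indicator (UNIV - \<Omega>) y *\<^sub>R (J (x - y) * h y) = 0}"
      then have "J (x - y) \<noteq> 0" "y \<notin> \<Omega>" "h y \<noteq> 0" by (auto split: split_indicator)
      then have "norm (x - y) < d" using J_zero by (meson not_le)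
      then have "y \<in> ball x d" by (simp add: dist_norm)
      then obtain B where "B \<in> F" "y \<in> B" using cov by auto
      moreover have "y \<in> H" using \<open>y \<notin> \<Omega>\<close> \<open>h y \<noteq> 0\<close> by (simp add: H_def)
      ultimately show "y \<in> (\<Union>B\<in>F. B \<inter> H)" by auto
    qed
  qed
  then show ?thesis unfolding set_lebesgue_integral_def by (rule integral_eq_zero_AE)
qed


theorem lemma4p2:
  fixes \<Omega> :: "(real ^ 'n) set"
    and J h u0 :: "real ^ 'n \<Rightarrow> real"
    and u :: "real ^ 'n \<Rightarrow> real \<Rightarrow> real"
    and d T \<alpha> :: real
  assumes dom: "smooth_domain \<Omega>"
    and J_meas: "J \<in> borel_measurable lborel"
    and J_bdd: "\<exists>M. \<forall>z. \<bar>J z\<bar> \<le> M"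
    and J_nonneg: "\<forall>z. J z \<ge> 0"
    and J_sym: "\<forall>z. J (- z) = J z"
    and J_int: "integrable lborel J" "(LINT z|lborel. J z) = 1"
    and d_pos: "d > 0"
    and J_pos: "\<forall>z. norm z < d \<longrightarrow> J z > 0"
    and J_zero: "\<forall>z. norm z \<ge> d \<longrightarrow> J z = 0"
    and T: "0 < T" "T < 1"
    and alpha: "\<alpha> \<ge> 1"
    and h_meas: "set_borel_measurable lborel (UNIV - \<Omega>) h"
    and h_bdd: "\<exists>M. \<forall>y\<in>UNIV - \<Omega>. \<bar>h y\<bar> \<le> M"
    and h_nonneg: "\<forall>y\<in>UNIV - \<Omega>. h y \<ge> 0"
    and h_pos: "(LINT x:\<Omega>|lborel. (LINT y:(UNIV - \<Omega>)|lborel. J (x - y) * h y)) > 0"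
    and u0_meas: "set_borel_measurable lborel \<Omega> u0"
    and u0_bdd: "\<exists>M. \<forall>x\<in>\<Omega>. \<bar>u0 x\<bar> \<le> M"
    and u0_nonneg: "\<forall>x\<in>\<Omega>. u0 x \<ge> 0"
    and sol: "is_solution \<Omega> J h T \<alpha> u0 u"
  shows "\<exists>C. \<forall>i::nat. \<forall>t\<in>{0..<T}. \<forall>x\<in>Omset \<Omega> h d (i - 1).
           1 \<le> i \<and> real i \<le> \<alpha> \<longrightarrow>
             (real i \<noteq> \<alpha> \<longrightarrow> u x t \<le> C / (T - t) powr (\<alpha> - real i)) \<and>
             (real i = \<alpha> \<longrightarrow> u x t \<le> - C * ln (T - t))"
proof -
  obtain Mh0 where Mh0: "\<forall>y\<in>UNIV - \<Omega>. \<bar>h y\<bar> \<le> Mh0" using h_bdd by blast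
  define Mh where "Mh = max Mh0 0"
  have Mh: "\<forall>y\<in>UNIV - \<Omega>. \<bar>h y\<bar> \<le> Mh" "Mh \<ge> 0" using Mh0 by (auto simp: Mh_def le_max_iff_disj)
  obtain M0 where M0: "\<forall>x\<in>\<Omega>. \<bar>u0 x\<bar> \<le> M0" using u0_bdd by blast
  have Oopen: "open \<Omega>" using dom by (simp add: smooth_domain_def)
  note sol' = sol[unfolded is_solution_def]
  note sb = sol'[THEN conjunct2, THEN conjunct1]
  note s0 = sol'[THEN conjunct2, THEN conjunct2, THEN conjunct1]
  note sd = sol'[THEN conjunct2, THEN conjunct2, THEN conjunct2]
  define D where "D x t = (LINT y:\<Omega>|lborel. J (x - y) * (u y t - u x t)) +
            (T - t) powr (- \<alpha>) * (LINT y:(UNIV - \<Omega>)|lborel. J (x - y) * h y)" for x t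
  have der: "\<And>x t. x \<in> Omset \<Omega> h d k \<Longrightarrow> 0 \<le> t \<Longrightarrow> t < T \<Longrightarrow> (u x has_real_derivative D x t) (at t within {0..<T})" for k
  proof -
    fix x t assume "x \<in> Omset \<Omega> h d k" "0 \<le> t" "t < T"
    then have "x \<in> \<Omega>" "t \<in> {0..<T}" using subsetD[OF Omset_sub] by auto
    then show "(u x has_real_derivative D x t) (at t within {0..<T})"
      using sd unfolding D_def by blast
  qed
  have bdd: "\<And>t'. 0 \<le> t' \<Longrightarrow> t' < T \<Longrightarrow> \<exists>M. \<forall>x\<in>Omset \<Omega> h d k. \<forall>s\<in>{0..t'}. \<bar>u x s\<bar> \<le> M" for k
  proof -
    fix t' :: real assume "0 \<le> t'" "t' < T"
    then have "t' \<in> {0..<T}" by simp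
    then obtain M where M: "\<forall>y\<in>\<Omega>. \<forall>s\<in>{0..t'}. \<bar>u y s\<bar> \<le> M" using sb by blast
    have "\<forall>x\<in>Omset \<Omega> h d k. \<forall>s\<in>{0..t'}. \<bar>u x s\<bar> \<le> M"
      using M subsetD[OF Omset_sub[of \<Omega> h d k]] by blast
    then show "\<exists>M. \<forall>x\<in>Omset \<Omega> h d k. \<forall>s\<in>{0..t'}. \<bar>u x s\<bar> \<le> M" by blast
  qed
  have init: "\<And>x. x \<in> Omset \<Omega> h d k \<Longrightarrow> \<bar>u x 0\<bar> \<le> M0" for k
    using s0 M0 subsetD[OF Omset_sub[of \<Omega> h d k]] by fastforce
  have JB: "\<bar>LINT y:A|lborel. f y\<bar> \<le> B" if "B \<ge> 0" "\<And>y. y \<in> A \<Longrightarrow> \<bar>f y\<bar> \<le> J (x - y) * B" for A f B x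
    by (rule J_bound_int[OF J_meas J_int(1) J_sym J_int(2) J_nonneg that])
  have main: "1 \<le> i \<longrightarrow> real i \<le> \<alpha> \<longrightarrow> (\<exists>C\<ge>0. \<forall>x\<in>Omset \<Omega> h d (i - 1). \<forall>t. 0 \<le> t \<longrightarrow> t < T \<longrightarrow>
      \<bar>u x t\<bar> \<le> C * (if real i = \<alpha> then - ln (T - t) else (T - t) powr (-(\<alpha> - real i))))" for i
  proof (induction i)
    case 0 then show ?case by simp
  next
    case (Suc i)
    show ?case
    proof (intro impI)
      assume i1: "1 \<le> Suc i" and ia: "real (Suc i) \<le> \<alpha>"
      show "\<exists>C\<ge>0. \<forall>x\<in>Omset \<Omega> h d (Suc i - 1). \<forall>t. 0 \<le> t \<longrightarrow> t < T \<longrightarrow>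
      \<bar>u x t\<bar> \<le> C * (if real (Suc i) = \<alpha> then - ln (T - t) else (T - t) powr (-(\<alpha> - real (Suc i))))"
      proof (cases "i = 0")
        case True
        have "\<exists>C\<ge>0. \<forall>x\<in>Omset \<Omega> h d 0. \<forall>t. 0 \<le> t \<longrightarrow> t < T \<longrightarrow>
           \<bar>u x t\<bar> \<le> C * (if \<alpha> = 1 then - ln (T - t) else (T - t) powr (-(\<alpha>-1)))"
        proof (rule level_bound[where D=D and K=Mh and MI=M0])
          fix t B x assume t: "0 \<le> t" "t < T" and B: "\<forall>y\<in>Omset \<Omega> h d 0. \<bar>u y t\<bar> \<le> B"
            and x: "x \<in> Omset \<Omega> h d 0"
          have B': "\<forall>y\<in>\<Omega>. \<bar>u y t\<bar> \<le> B" and x': "x \<in> \<Omega>" using B x by (auto simp: layer_simps)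
          have B0: "B \<ge> 0" using B' x' by (meson abs_ge_zero order_trans)
          have "\<bar>LINT y:\<Omega>|lborel. J (x - y) * (u y t - u x t)\<bar> \<le> 2 * B"
          proof (rule JB)
            fix y assume "y \<in> \<Omega>"
            then have "\<bar>u y t\<bar> \<le> B" "\<bar>u x t\<bar> \<le> B" using B' x' by auto
            then have "\<bar>u y t - u x t\<bar> \<le> 2 * B" using abs_triangle_ineq4[of "u y t" "u x t"] by linarith
            then show "\<bar>J (x - y) * (u y t - u x t)\<bar> \<le> J (x - y) * (2 * B)"
              using J_nonneg by (simp add: abs_mult mult_left_mono)
          qed (use B0 in simp)
          moreover have "\<bar>LINT y:(UNIV - \<Omega>)|lborel. J (x - y) * h y\<bar> \<le> Mh"
          proof (rule JB)
            fix y assume "y \<in> UNIV - \<Omega>"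
            then show "\<bar>J (x - y) * h y\<bar> \<le> J (x - y) * Mh"
              using J_nonneg Mh by (simp add: abs_mult mult_left_mono)
          qed (use Mh in simp)
          moreover have "(T - t) powr (- \<alpha>) \<ge> 0" by simp
          ultimately have "\<bar>(T - t) powr (- \<alpha>) * (LINT y:(UNIV - \<Omega>)|lborel. J (x - y) * h y)\<bar> \<le> Mh * (T - t) powr (- \<alpha>)"
            unfolding abs_mult by (metis abs_of_nonneg mult.commute mult_left_mono)
          with \<open>\<bar>LINT y:\<Omega>|lborel. J (x - y) * (u y t - u x t)\<bar> \<le> 2 * B\<close>
          show "\<bar>D x t\<bar> \<le> 2 * B + Mh * (T - t) powr - \<alpha>" unfolding D_def by linarith
        qed (use T alpha Mh der bdd init in auto)
        moreover have eqphi: "(if \<alpha> = 1 then - ln (T - t) else (T - t) powr (-(\<alpha>-1)))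
            = (if real (Suc 0) = \<alpha> then - ln (T - t) else (T - t) powr (-(\<alpha> - real (Suc 0))))" for t
          by auto
        ultimately show ?thesis by (simp only: True diff_Suc_1 eqphi)
      next
        case False
        then have i1': "1 \<le> i" and ia': "real i \<le> \<alpha>" and ine: "real i \<noteq> \<alpha>" using ia by auto
        obtain Ci where Ci0: "Ci \<ge> 0" and Ci: "\<And>x t. x\<in>Omset \<Omega> h d (i - 1) \<Longrightarrow> 0 \<le> t \<Longrightarrow> t < T \<Longrightarrow>
            \<bar>u x t\<bar> \<le> Ci * (T - t) powr (-(\<alpha> - real i))"
          using Suc.IH i1' ia' ine by auto
        have "\<exists>C\<ge>0. \<forall>x\<in>Omset \<Omega> h d i. \<forall>t. 0 \<le> t \<longrightarrow> t < T \<longrightarrow>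
           \<bar>u x t\<bar> \<le> C * (if \<alpha> - real i = 1 then - ln (T - t) else (T - t) powr (-((\<alpha> - real i)-1)))"
        proof (rule level_bound[where D=D and K=Ci and MI=M0])
          fix t B x assume t: "0 \<le> t" "t < T" and B: "\<forall>y\<in>Omset \<Omega> h d i. \<bar>u y t\<bar> \<le> B"
            and x: "x \<in> Omset \<Omega> h d i"
          have x': "x \<in> \<Omega>" using x subsetD[OF Omset_sub[of \<Omega> h d i]] by blast
          have B0: "B \<ge> 0" using B x by (meson abs_ge_zero order_trans)
          have x1: "x \<in> Omset \<Omega> h d (Suc 0)" using x Omset_anti[of "Suc 0" i] i1' by auto
          have g0: "(LINT y:(UNIV - \<Omega>)|lborel. J (x - y) * h y) = 0"
            by (rule g_zero[OF Oopen h_meas J_zero]) (use Omset1[OF x1] in auto)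
          have "\<bar>LINT y:\<Omega>|lborel. J (x - y) * (u y t - u x t)\<bar> \<le> Ci * (T - t) powr (-(\<alpha> - real i)) + B"
          proof (rule JB)
            fix y assume y: "y \<in> \<Omega>"
            show "\<bar>J (x - y) * (u y t - u x t)\<bar> \<le> J (x - y) * (Ci * (T - t) powr (-(\<alpha> - real i)) + B)"
            proof (cases "J (x - y) = 0")
              case True then show ?thesis by simp
            next
              case False
              then have "dist x y < d" using J_zero by (metis dist_norm not_le)
              then have "y \<in> Omset \<Omega> h d (i - 1)"
                using Omset_key[of x \<Omega> h d "i - 1" y] x y i1' by simp
              then have "\<bar>u y t\<bar> \<le> Ci * (T - t) powr (-(\<alpha> - real i))" using Ci t by blast
              moreover have "\<bar>u x t\<bar> \<le> B" using B x by blast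
              ultimately have "\<bar>u y t - u x t\<bar> \<le> Ci * (T - t) powr (-(\<alpha> - real i)) + B"
                using abs_triangle_ineq4[of "u y t" "u x t"] by linarith
              then show ?thesis using J_nonneg by (simp add: abs_mult mult_left_mono)
            qed
          qed (use B0 Ci0 in simp)
          then show "\<bar>D x t\<bar> \<le> 2 * B + Ci * (T - t) powr - (\<alpha> - real i)"
            unfolding D_def g0 using B0 by simp
        qed (use T ia Ci0 der bdd init in auto)
        moreover have "(if \<alpha> - real i = 1 then - ln (T - t) else (T - t) powr (-((\<alpha> - real i)-1)))
            = (if real (Suc i) = \<alpha> then - ln (T - t) else (T - t) powr (-(\<alpha> - real (Suc i))))" for t
          by (auto simp: algebra_simps)
        ultimately show ?thesis by (simp only: diff_Suc_1)
      qed
    qed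
  qed
  then have "\<forall>i. \<exists>C. 1 \<le> i \<and> real i \<le> \<alpha> \<longrightarrow> C \<ge> 0 \<and> (\<forall>x\<in>Omset \<Omega> h d (i - 1). \<forall>t. 0 \<le> t \<longrightarrow> t < T \<longrightarrow>
      \<bar>u x t\<bar> \<le> C * (if real i = \<alpha> then - ln (T - t) else (T - t) powr (-(\<alpha> - real i))))"
    by blast
  then obtain Cf where Cf: "\<And>i. 1 \<le> i \<Longrightarrow> real i \<le> \<alpha> \<Longrightarrow> Cf i \<ge> 0 \<and> (\<forall>x\<in>Omset \<Omega> h d (i - 1). \<forall>t. 0 \<le> t \<longrightarrow> t < T \<longrightarrow>
      \<bar>u x t\<bar> \<le> Cf i * (if real i = \<alpha> then - ln (T - t) else (T - t) powr (-(\<alpha> - real i))))"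
    by metis
  define C where "C = (\<Sum>i\<in>{1..nat \<lfloor>\<alpha>\<rfloor>}. Cf i)"
  show ?thesis
  proof (intro exI[of _ C] allI ballI impI)
    fix i :: nat and t x
    assume t: "t \<in> {0..<T}" and x: "x \<in> Omset \<Omega> h d (i - 1)" and i: "1 \<le> i \<and> real i \<le> \<alpha>"
    have iin: "i \<in> {1..nat \<lfloor>\<alpha>\<rfloor>}" using i by (auto simp: le_nat_iff le_floor_iff)
    have "Cf i \<le> C" unfolding C_def
    proof (rule member_le_sum[OF iin])
      fix j assume j: "j \<in> {1..nat \<lfloor>\<alpha>\<rfloor>} - {i}"
      have fl: "0 \<le> \<lfloor>\<alpha>\<rfloor>" using alpha by simp
      have "int j \<le> \<lfloor>\<alpha>\<rfloor>" using j fl by (auto simp: le_nat_iff)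
      then have "real j \<le> \<alpha>" by (simp add: le_floor_iff)
      then show "0 \<le> Cf j" using Cf[of j] j by auto
    qed simp
    define \<phi> where "\<phi> = (if real i = \<alpha> then - ln (T - t) else (T - t) powr (-(\<alpha> - real i)))"
    have phi0: "\<phi> \<ge> 0" unfolding \<phi>_def using t T by auto
    have "\<bar>u x t\<bar> \<le> Cf i * \<phi>" using Cf[of i] i x t unfolding \<phi>_def by auto
    also have "\<dots> \<le> C * \<phi>" using \<open>Cf i \<le> C\<close> phi0 by (intro mult_right_mono)
    finally have ub: "u x t \<le> C * \<phi>" by linarith
    show "(real i \<noteq> \<alpha> \<longrightarrow> u x t \<le> C / (T - t) powr (\<alpha> - real i)) \<and>
          (real i = \<alpha> \<longrightarrow> u x t \<le> - C * ln (T - t))"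
    proof (intro conjI impI)
      assume "real i \<noteq> \<alpha>"
      moreover have "(T - t) powr (-(\<alpha> - real i)) = 1 / (T - t) powr (\<alpha> - real i)"
        by (rule powr_minus_divide)
      ultimately show "u x t \<le> C / (T - t) powr (\<alpha> - real i)" using ub unfolding \<phi>_def by simp
    next
      assume "real i = \<alpha>"
      then show "u x t \<le> - C * ln (T - t)" using ub unfolding \<phi>_def by simp
    qed
  qed
qed

end
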